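(* Fix $e\in -\mathrm{int}(C)$ and define $v_e:\mathcal P^0_{\mp C}(Y)\to\overline{\mathbb R}^2$ by $v_e(A)=w_e(\{0\},A)=\big(-G^\ell_e(\{0\},A),\,G^u_e(A,\{0\})\big)$. Then $v_e$ is $s$-increasing on $\mathcal P^0_{\mp C}(Y)$, strictly $s$-increasing on the family of $\mp C$-compact sets in $\mathcal P^0_{\mp C}(Y)$, and for $A,B\in\mathcal P^0_{\mp C}(Y)$ with $A\in[B]^s$ one has $v_e(A)=v_e(B)$.
   Context: $Y$ is a real topological linear space and $C\subset Y$ is a convex, closed, pointed cone with nonempty interior. $\mathbb R^2$ is ordered by $\mathbb R^2_+$ ($a\le b$ iff $b-a\in\mathbb R^2_+$, $a<b$ iff $b-a\in\mathrm{int}\,\mathbb R^2_+$). $\mathcal P^0_{\mp C}(Y)$ is the family of nonempty $A\subset Y$ with $A+C\neq Y$ and $A-C\neq Y$. $C$-compact: every cover by sets $U_\alpha+C$, $U_\alpha$ open, has a finite subcover; $\mp C$-compact: $C$-compact and $-C$-compact. $A\preceq^s B$ iff $B\subset A+C$ and $A\subset B-C$; $A\prec^s B$ iff $B\subset A+\mathrm{int}C$ and $A\subset B-\mathrm{int}C$; $[A]^s$ is the class of $A$ under $A\sim^s B\iff (A\preceq^sB\text{ and }B\preceq^sA)$. $\phi_{e,A}(y)=\inf\{t\in\mathbb R: y\in te+A+C\}$; $G^\ell_e(A,B)=\sup_{b\in B}\phi_{e,A}(b)$; $G^u_e(B,A):=-G^\ell_e(-B,-A)$; $w_e(A,B)=(-G^\ell_e(A,B),G^u_e(B,A))$.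 A map $T$ is $s$-increasing on $\mathcal A$ if $A,B\in\mathcal A$, $A\preceq^sB$ imply $T(A)\le_{\mathbb R^2_+}T(B)$; strictly $s$-increasing if $A\prec^sB$ implies $T(A)<_{\mathbb R^2_+}T(B)$. *)

theory Defs
  imports "HOL-Analysis.Analysis"
begin

definition topological_linear_space :: "'a::{real_vector,topological_space} itself \<Rightarrow> bool" where
  "topological_linear_space _ \<longleftrightarrow>
     continuous_on UNIV (\<lambda>p::'a \<times> 'a. fst p + snd p) \<and>
     continuous_on UNIV (\<lambda>p::real \<times> 'a. fst p *\<^sub>R snd p)"

definition msum :: "'a::real_vector set \<Rightarrow> 'a set \<Rightarrow> 'a set" where
  "msum A B = {a + b | a b. a \<in> A \<and> b \<in> B}"

definition mdiff :: "'a::real_vector set \<Rightarrow> 'a set \<Rightarrow> 'a set" where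
  "mdiff A B = {a - b | a b. a \<in> A \<and> b \<in> B}"

definition P0 :: "'a::real_vector set \<Rightarrow> 'a set set" where
  "P0 C = {A. A \<noteq> {} \<and> msum A C \<noteq> UNIV \<and> mdiff A C \<noteq> UNIV}"

definition C_compact :: "'a::{real_vector,topological_space} set \<Rightarrow> 'a set \<Rightarrow> bool" where
  "C_compact C A \<longleftrightarrow>
     (\<forall>\<U>. (\<forall>U\<in>\<U>. open U) \<and> A \<subseteq> (\<Union>U\<in>\<U>. msum U C) \<longrightarrow>
        (\<exists>\<V>\<subseteq>\<U>. finite \<V> \<and> A \<subseteq> (\<Union>U\<in>\<V>. msum U C)))"

definition mp_C_compact :: "'a::{real_vector,topological_space} set \<Rightarrow> 'a set \<Rightarrow> bool" where
  "mp_C_compact C A \<longleftrightarrow> C_compact C A \<and> C_compact (uminus ` C) A"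

definition set_le_s :: "'a::real_vector set \<Rightarrow> 'a set \<Rightarrow> 'a set \<Rightarrow> bool" where
  "set_le_s C A B \<longleftrightarrow> B \<subseteq> msum A C \<and> A \<subseteq> mdiff B C"

definition set_less_s :: "'a::{real_vector,topological_space} set \<Rightarrow> 'a set \<Rightarrow> 'a set \<Rightarrow> bool" where
  "set_less_s C A B \<longleftrightarrow> B \<subseteq> msum A (interior C) \<and> A \<subseteq> mdiff B (interior C)"

definition set_equiv_s :: "'a::real_vector set \<Rightarrow> 'a set \<Rightarrow> 'a set \<Rightarrow> bool" where
  "set_equiv_s C A B \<longleftrightarrow> set_le_s C A B \<and> set_le_s C B A"

definition s_class :: "'a::real_vector set \<Rightarrow> 'a set \<Rightarrow> 'a set set" where
  "s_class C A = {B. set_equiv_s C A B}"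

text \<open>Scalarization functional, values in extended reals (\<open>inf \<emptyset> = +\<infinity>\<close>).\<close>
definition phi :: "'a::real_vector set \<Rightarrow> 'a \<Rightarrow> 'a set \<Rightarrow> 'a \<Rightarrow> ereal" where
  "phi C e A y = Inf {ereal t | t. y \<in> msum (msum {t *\<^sub>R e} A) C}"

definition G_l :: "'a::real_vector set \<Rightarrow> 'a \<Rightarrow> 'a set \<Rightarrow> 'a set \<Rightarrow> ereal" where
  "G_l C e A B = (SUP b\<in>B. phi C e A b)"

definition G_u :: "'a::real_vector set \<Rightarrow> 'a \<Rightarrow> 'a set \<Rightarrow> 'a set \<Rightarrow> ereal" where
  "G_u C e B A = - G_l C e (uminus ` B) (uminus ` A)"

definition w_e :: "'a::real_vector set \<Rightarrow> 'a \<Rightarrow> 'a set \<Rightarrow> 'a set \<Rightarrow> ereal \<times> ereal" where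
  "w_e C e A B = (- G_l C e A B, G_u C e B A)"

definition v_e :: "'a::real_vector set \<Rightarrow> 'a \<Rightarrow> 'a set \<Rightarrow> ereal \<times> ereal" where
  "v_e C e A = w_e C e {0} A"

text \<open>Componentwise order on \<open>\<overline>\<real>\<^sup>2\<close> induced by \<open>\<real>\<^sup>2\<^sub>+\<close> and its strict version (interior).\<close>
definition le2 :: "ereal \<times> ereal \<Rightarrow> ereal \<times> ereal \<Rightarrow> bool" where
  "le2 a b \<longleftrightarrow> fst a \<le> fst b \<and> snd a \<le> snd b"

definition lt2 :: "ereal \<times> ereal \<Rightarrow> ereal \<times> ereal \<Rightarrow> bool" where
  "lt2 a b \<longleftrightarrow> fst a < fst b \<and> snd a < snd b"

definition s_increasing :: "'a::real_vector set \<Rightarrow> 'a set set \<Rightarrow> ('a set \<Rightarrow> ereal \<times> ereal) \<Rightarrow> bool" where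
  "s_increasing C \<A> T \<longleftrightarrow> (\<forall>A\<in>\<A>. \<forall>B\<in>\<A>. set_le_s C A B \<longrightarrow> le2 (T A) (T B))"

definition strictly_s_increasing :: "'a::{real_vector,topological_space} set \<Rightarrow> 'a set set \<Rightarrow> ('a set \<Rightarrow> ereal \<times> ereal) \<Rightarrow> bool" where
  "strictly_s_increasing C \<A> T \<longleftrightarrow> (\<forall>A\<in>\<A>. \<forall>B\<in>\<A>. set_less_s C A B \<longrightarrow> lt2 (T A) (T B))"

end

theory Submission
  imports Defs
begin

locale sett =
  fixes C :: "'a::{real_vector,topological_space} set" and e :: 'a
  assumes tls: "topological_linear_space TYPE('a)"
    and cvx: "convex C" and cne: "cone C" and pt: "C \<inter> uminus ` C = {0}"
    and eint: "e \<in> uminus ` interior C"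
begin

definition S :: "'a \<Rightarrow> real set" where "S y = {t. y - t *\<^sub>R e \<in> C}"
definition ph :: "'a \<Rightarrow> ereal" where "ph y = Inf (ereal ` S y)"
definition J :: "'a set \<Rightarrow> ereal" where "J A = Inf (ereal ` {t. \<exists>a\<in>A. a - t *\<^sub>R e \<in> C})"

lemma zero_C: "0 \<in> C" using pt by auto

lemma add_C: assumes "x \<in> C" "y \<in> C" shows "x + y \<in> C"
proof -
  have "(1/2) *\<^sub>R x + (1/2) *\<^sub>R y \<in> C" using cvx assms by (simp add: convexD)
  then have "2 *\<^sub>R ((1/2) *\<^sub>R x + (1/2) *\<^sub>R y) \<in> C" using cne unfolding cone_def by auto
  then show ?thesis by (simp add: scaleR_right_distrib)
qed

lemma me_int: "- e \<in> interior C" using eint by auto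
lemma me_C: "- e \<in> C" using me_int interior_subset by blast

lemma v_eq: "v_e C e A = (- (SUP a\<in>A. ph a), - J A)"
proof -
  have 1: "phi C e {0} y = ph y" for y
  proof -
    have "{ereal t | t. y \<in> msum (msum {t *\<^sub>R e} {0}) C} = ereal ` S y"
      unfolding S_def msum_def by (auto, metis add.commute diff_add_cancel)
    then show ?thesis unfolding phi_def ph_def by simp
  qed
  have m2: "0 \<in> msum (msum {v} (uminus ` A)) C \<longleftrightarrow> (\<exists>a\<in>A. a - v \<in> C)" for v
  proof
    assume "0 \<in> msum (msum {v} (uminus ` A)) C"
    then obtain a c where "a \<in> A" "c \<in> C" "0 = (v + - a) + c" unfolding msum_def by auto
    then have "a - v = c" by (simp add: algebra_simps eq_neg_iff_add_eq_0)
    then show "\<exists>a\<in>A. a - v \<in> C" using \<open>a \<in> A\<close> \<open>c \<in> C\<close> by auto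
  next
    assume "\<exists>a\<in>A. a - v \<in> C"
    then obtain a where a: "a \<in> A" "a - v \<in> C" by auto
    have "v + - a \<in> msum {v} (uminus ` A)" unfolding msum_def using a by auto
    moreover have "0 = (v + - a) + (a - v)" by simp
    ultimately show "0 \<in> msum (msum {v} (uminus ` A)) C" unfolding msum_def using a(2) by blast
  qed
  have 2: "phi C e (uminus ` A) 0 = J A"
  proof -
    have "{ereal t | t. 0 \<in> msum (msum {t *\<^sub>R e} (uminus ` A)) C} = ereal ` {t. \<exists>a\<in>A. a - t *\<^sub>R e \<in> C}"
      unfolding m2 by auto
    then show ?thesis unfolding phi_def J_def by simp
  qed
  show ?thesis unfolding v_e_def w_e_def G_u_def G_l_def using 1 2 by simp
qed

lemma openvim: assumes "continuous_on UNIV f" "open U" shows "open (f -` U)"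
proof -
  have "\<forall>B. open B \<longrightarrow> open (f -` B \<inter> UNIV)" using continuous_on_open_vimage[OF open_UNIV, of f] assms(1) by simp
  then have "open (f -` U \<inter> UNIV)" using assms(2) by blast
  then show ?thesis by simp
qed

lemma cont_add: "continuous_on UNIV (\<lambda>y::'a. y + w)"
proof -
  have c: "continuous_on UNIV (\<lambda>p::'a \<times> 'a. fst p + snd p)" using tls unfolding topological_linear_space_def by auto
  have "continuous_on UNIV ((\<lambda>p::'a \<times> 'a. fst p + snd p) \<circ> (\<lambda>y. (y, w)))"
    by (rule continuous_on_compose) (intro continuous_on_Pair continuous_on_id continuous_on_const, rule continuous_on_subset[OF c], simp)
  then show ?thesis by (simp add: o_def)
qed

lemma cont_smul: "continuous_on UNIV (\<lambda>s::real. s *\<^sub>R (y::'a))"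
proof -
  have c: "continuous_on UNIV (\<lambda>p::real \<times> 'a. fst p *\<^sub>R snd p)" using tls unfolding topological_linear_space_def by auto
  have "continuous_on UNIV ((\<lambda>p::real \<times> 'a. fst p *\<^sub>R snd p) \<circ> (\<lambda>s. (s, y)))"
    by (rule continuous_on_compose) (intro continuous_on_Pair continuous_on_id continuous_on_const, rule continuous_on_subset[OF c], simp)
  then show ?thesis by (simp add: o_def)
qed

lemma open_pre: assumes "open U" shows "open {y. y + (w::'a) \<in> U}"
proof -
  have "open ((\<lambda>y. y + w) -` U)" using openvim[OF cont_add assms] .
  then show ?thesis by (simp add: vimage_def)
qed

lemma open_pre_neg: assumes "open U" shows "open {y. (w::'a) - y \<in> U}"
proof -
  have c: "continuous_on UNIV (\<lambda>y::'a. w - y)"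
  proof -
    have c1: "continuous_on UNIV (\<lambda>y::'a. (-1::real) *\<^sub>R y)"
    proof -
      have c: "continuous_on UNIV (\<lambda>p::real \<times> 'a. fst p *\<^sub>R snd p)" using tls unfolding topological_linear_space_def by auto
      have "continuous_on UNIV ((\<lambda>p::real \<times> 'a. fst p *\<^sub>R snd p) \<circ> (\<lambda>y. (-1, y)))"
        by (rule continuous_on_compose) (intro continuous_on_Pair continuous_on_id continuous_on_const, rule continuous_on_subset[OF c], simp)
      then show ?thesis by (simp add: o_def)
    qed
    have "continuous_on UNIV ((\<lambda>y. y + w) \<circ> (\<lambda>y::'a. (-1::real) *\<^sub>R y))"
      by (rule continuous_on_compose[OF c1]) (intro continuous_on_subset[OF cont_add], auto)
    then show ?thesis by (simp add: o_def)
  qed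
  have "open ((\<lambda>y. w - y) -` U)" using openvim[OF c assms] .
  then show ?thesis by (simp add: vimage_def)
qed

lemma small_pos: assumes "open (G::real set)" "0 \<in> G" shows "\<exists>\<epsilon>>0. \<epsilon> \<in> G"
proof -
  obtain r where r: "r > 0" "ball 0 r \<subseteq> G" using assms openE by blast
  then have "r/2 \<in> G" by (auto simp: dist_real_def)
  then show ?thesis using r by (intro exI[of _ "r/2"]) auto
qed

lemma open_line: assumes "open U" shows "open {s::real. (c::'a) + s *\<^sub>R y \<in> U}"
proof -
  have "continuous_on UNIV ((\<lambda>z. z + c) \<circ> (\<lambda>s::real. s *\<^sub>R y))"
    by (rule continuous_on_compose[OF cont_smul]) (intro continuous_on_subset[OF cont_add], auto)
  then have cc: "continuous_on UNIV (\<lambda>s. s *\<^sub>R y + c)" by (simp add: o_def)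
  have "open ((\<lambda>s. s *\<^sub>R y + c) -` U)" using openvim[OF cc assms] .
  then show ?thesis by (simp add: vimage_def add.commute)
qed

lemma eps_int: assumes "c \<in> interior C" shows "\<exists>\<epsilon>>0. c + \<epsilon> *\<^sub>R e \<in> interior C"
  using small_pos[OF open_line[OF open_interior, of c e]] assms by auto

lemma S_ne: "\<exists>t. y - t *\<^sub>R e \<in> C"
proof -
  obtain \<epsilon> where ep: "\<epsilon> > 0" "- e + \<epsilon> *\<^sub>R y \<in> interior C"
    using small_pos[OF open_line[OF open_interior, of "-e" y]] me_int by auto
  then have "- e + \<epsilon> *\<^sub>R y \<in> C" using interior_subset by blast
  then have "(1/\<epsilon>) *\<^sub>R (- e + \<epsilon> *\<^sub>R y) \<in> C" using cne ep unfolding cone_def by auto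
  moreover have "(1/\<epsilon>) *\<^sub>R (- e + \<epsilon> *\<^sub>R y) = y - (1/\<epsilon>) *\<^sub>R e"
    using ep by (simp add: scaleR_right_distrib scaleR_diff_right)
  ultimately show ?thesis by auto
qed

lemma ph_fin_top: "ph y < \<infinity>"
proof -
  obtain t where "t \<in> S y" using S_ne unfolding S_def by auto
  then have "ph y \<le> ereal t" unfolding ph_def by (simp add: Inf_lower)
  then show ?thesis by auto
qed

lemma S_up: assumes "t \<in> S y" "t \<le> t'" shows "t' \<in> S y"
proof -
  have "(t' - t) *\<^sub>R (- e) \<in> C" using me_C cne assms unfolding cone_def by auto
  moreover have "y - t *\<^sub>R e \<in> C" using assms unfolding S_def by auto
  ultimately have X: "(y - t *\<^sub>R e) + (t' - t) *\<^sub>R (- e) \<in> C" using add_C by blast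
  have eq: "(y - t *\<^sub>R e) + (t' - t) *\<^sub>R (- e) = y - t' *\<^sub>R e" by (simp add: algebra_simps)
  show ?thesis unfolding S_def using X eq by (metis mem_Collect_eq)
qed

lemma ph_fin_bot: assumes "mdiff A C \<noteq> UNIV" "a \<in> A" shows "ph a > - \<infinity>"
proof (rule ccontr)
  assume "\<not> ph a > - \<infinity>"
  then have m: "ph a = - \<infinity>" by auto
  have all: "t \<in> S a" for t
  proof -
    have "Inf (ereal ` S a) < ereal t" using m unfolding ph_def by simp
    then obtain x where "x \<in> S a" "ereal x < ereal t" by (auto simp: Inf_less_iff)
    then show ?thesis using S_up by auto
  qed
  have "z \<in> mdiff A C" for z
  proof -
    obtain s where s: "- z - s *\<^sub>R e \<in> C" using S_ne by auto
    have "a + s *\<^sub>R e \<in> C" using all[of "-s"] unfolding S_def by auto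
    then have "(a + s *\<^sub>R e) + (- z - s *\<^sub>R e) \<in> C" using add_C s by blast
    then have "a - z \<in> C" by (simp add: algebra_simps)
    moreover have "z = a - (a - z)" by simp
    ultimately show ?thesis unfolding mdiff_def using assms(2) by blast
  qed
  then show False using assms(1) by auto
qed

lemma ph_mono: assumes "y - z \<in> C" shows "ph y \<le> ph z"
proof -
  have "S z \<subseteq> S y"
  proof
    fix t assume "t \<in> S z"
    then have "(y - z) + (z - t *\<^sub>R e) \<in> C" using add_C assms unfolding S_def by blast
    then show "t \<in> S y" unfolding S_def by simp
  qed
  then show ?thesis unfolding ph_def by (intro Inf_superset_mono image_mono)
qed

lemma mono_le: assumes "set_le_s C A B" shows "le2 (v_e C e A) (v_e C e B)"
proof -
  have 1: "(SUP b\<in>B. ph b) \<le> (SUP a\<in>A. ph a)"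
  proof (rule SUP_least)
    fix b assume "b \<in> B"
    then obtain a c where ac: "a \<in> A" "c \<in> C" "b = a + c" using assms unfolding set_le_s_def msum_def by blast
    then have "ph b \<le> ph a" using ph_mono[of b a] by simp
    then show "ph b \<le> (SUP a\<in>A. ph a)" using ac(1) by (meson SUP_upper2)
  qed
  have 2: "J B \<le> J A"
  proof -
    have "{t. \<exists>a\<in>A. a - t *\<^sub>R e \<in> C} \<subseteq> {t. \<exists>b\<in>B. b - t *\<^sub>R e \<in> C}"
    proof
      fix t assume "t \<in> {t. \<exists>a\<in>A. a - t *\<^sub>R e \<in> C}"
      then obtain a where a: "a \<in> A" "a - t *\<^sub>R e \<in> C" by auto
      then obtain b c where bc: "b \<in> B" "c \<in> C" "a = b - c" using assms unfolding set_le_s_def mdiff_def by blast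
      have "c + (a - t *\<^sub>R e) \<in> C" using add_C bc a by blast
      then have "b - t *\<^sub>R e \<in> C" using bc by simp
      then show "t \<in> {t. \<exists>b\<in>B. b - t *\<^sub>R e \<in> C}" using bc by auto
    qed
    then show ?thesis unfolding J_def by (intro Inf_superset_mono image_mono)
  qed
  show ?thesis unfolding le2_def v_eq using 1 2 by simp
qed

lemma ereal_aux: assumes "x + ereal \<epsilon> \<le> ereal r" shows "x \<le> ereal (r - \<epsilon>)"
  using assms by (cases x) auto

lemma strict1:
  assumes A: "A \<in> P0 C" and Bne: "B \<noteq> {}" and cpt: "C_compact C B" and lt: "set_less_s C A B"
  shows "(SUP b\<in>B. ph b) < (SUP a\<in>A. ph a)"
proof -
  define f where "f = (\<lambda>p::'a\<times>real. {y. y + (snd p *\<^sub>R e - fst p) \<in> interior C})"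
  define I where "I = {p::'a\<times>real. fst p \<in> A \<and> snd p > 0}"
  have opn: "\<forall>U\<in>f ` I. open U" unfolding f_def using open_pre[OF open_interior] by blast
  have cov: "B \<subseteq> (\<Union>U\<in>f ` I. msum U C)"
  proof
    fix b assume "b \<in> B"
    then obtain a c where ac: "a \<in> A" "c \<in> interior C" "b = a + c" using lt unfolding set_less_s_def msum_def by blast
    obtain \<epsilon> where ep: "\<epsilon> > 0" "c + \<epsilon> *\<^sub>R e \<in> interior C" using eps_int[OF ac(2)] by blast
    have eq: "b + (\<epsilon> *\<^sub>R e - a) = c + \<epsilon> *\<^sub>R e" using ac by (simp add: algebra_simps)
    have "b \<in> f (a, \<epsilon>) \<longleftrightarrow> b + (\<epsilon> *\<^sub>R e - a) \<in> interior C" unfolding f_def by simp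
    then have "b \<in> f (a, \<epsilon>)" using eq ep(2) by metis
    moreover have "b = b + 0" by simp
    ultimately have "b \<in> msum (f (a, \<epsilon>)) C" unfolding msum_def using zero_C by blast
    moreover have "(a, \<epsilon>) \<in> I" unfolding I_def using ac ep by simp
    ultimately show "b \<in> (\<Union>U\<in>f ` I. msum U C)" by blast
  qed
  obtain V where V: "V \<subseteq> f ` I" "finite V" "B \<subseteq> (\<Union>U\<in>V. msum U C)"
    using cpt opn cov unfolding C_compact_def by (metis (no_types, lifting))
  obtain P where P: "P \<subseteq> I" "finite P" "V = f ` P" using finite_subset_image[OF V(2) V(1)] by blast
  have key: "ph y + ereal (snd p) \<le> ph (fst p)" if p: "p \<in> I" and y: "y \<in> msum (f p) C" for p y
  proof -
    obtain u c' where uc: "u \<in> f p" "c' \<in> C" "y = u + c'" using y unfolding msum_def by blast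
    have u: "u + (snd p *\<^sub>R e - fst p) \<in> C" using uc(1) interior_subset unfolding f_def by blast
    show ?thesis unfolding ph_def[of "fst p"]
    proof (rule Inf_greatest)
      fix x assume "x \<in> ereal ` S (fst p)"
      then obtain t where t: "x = ereal t" "fst p - t *\<^sub>R e \<in> C" unfolding S_def by auto
      have "(u + (snd p *\<^sub>R e - fst p)) + c' \<in> C" using add_C u uc(2) by blast
      then have "((u + (snd p *\<^sub>R e - fst p)) + c') + (fst p - t *\<^sub>R e) \<in> C" using add_C t(2) by blast
      moreover have "((u + (snd p *\<^sub>R e - fst p)) + c') + (fst p - t *\<^sub>R e) = y - (t - snd p) *\<^sub>R e"
        using uc(3) by (simp add: algebra_simps)
      ultimately have "t - snd p \<in> S y" unfolding S_def by simp
      then have "ph y \<le> ereal (t - snd p)" unfolding ph_def by (simp add: Inf_lower)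
      then show "ph y + ereal (snd p) \<le> x" using t(1) by (cases "ph y") auto
    qed
  qed
  define r where "r = (\<lambda>p::'a\<times>real. real_of_ereal (ph (fst p)))"
  have rfin: "ph (fst p) = ereal (r p)" if "p \<in> I" for p
  proof -
    have "mdiff A C \<noteq> UNIV" using A unfolding P0_def by auto
    then have "ph (fst p) > - \<infinity>" using ph_fin_bot that unfolding I_def by auto
    moreover have "ph (fst p) < \<infinity>" using ph_fin_top by auto
    ultimately show ?thesis unfolding r_def by (cases "ph (fst p)") auto
  qed
  have Pne: "P \<noteq> {}" using Bne V(3) P(3) by auto
  define mr where "mr = Max (r ` P)"
  define \<delta> where "\<delta> = Min (snd ` P)"
  have dpos: "\<delta> > 0" unfolding \<delta>_def using Pne P(1,2) Min_in[of "snd ` P"] unfolding I_def by auto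
  have "ph b \<le> ereal (mr - \<delta>)" if bB: "b \<in> B" for b
  proof -
    obtain p where p: "p \<in> P" "b \<in> msum (f p) C" using V(3) P(3) bB by blast
    have "ph b + ereal (snd p) \<le> ereal (r p)" using key[of p b] rfin[of p] p P(1) by auto
    then have "ph b \<le> ereal (r p - snd p)" by (rule ereal_aux)
    moreover have "r p \<le> mr" unfolding mr_def using p P(2) by simp
    moreover have "\<delta> \<le> snd p" unfolding \<delta>_def using p P(2) by simp
    ultimately show ?thesis by (meson diff_mono ereal_less_eq(3) order_trans)
  qed
  then have "(SUP b\<in>B. ph b) \<le> ereal (mr - \<delta>)" by (simp add: SUP_least)
  also have "\<dots> < ereal mr" using dpos by simp
  also have "ereal mr \<le> (SUP a\<in>A. ph a)"
  proof -
    have "mr \<in> r ` P" unfolding mr_def using Max_in[of "r ` P"] P(2) Pne by auto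
    then obtain p where p: "p \<in> P" "mr = r p" by blast
    then have "ereal mr = ph (fst p)" using rfin[of p] P(1) by auto
    moreover have "fst p \<in> A" using p P(1) unfolding I_def by auto
    ultimately show ?thesis by (simp add: SUP_upper)
  qed
  finally show ?thesis .
qed

lemma strict2:
  assumes B: "B \<in> P0 C" and Ane: "A \<noteq> {}" and cpt: "C_compact (uminus ` C) A" and lt: "set_less_s C A B"
  shows "J B < J A"
proof -
  define g where "g = (\<lambda>p::'a\<times>real. {y. (fst p + snd p *\<^sub>R e) - y \<in> interior C})"
  define I where "I = {p::'a\<times>real. fst p \<in> B \<and> snd p > 0}"
  have opn: "\<forall>U\<in>g ` I. open U" unfolding g_def using open_pre_neg[OF open_interior] by blast
  have z: "0 \<in> uminus ` C" using zero_C by force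
  have cov: "A \<subseteq> (\<Union>U\<in>g ` I. msum U (uminus ` C))"
  proof
    fix a assume "a \<in> A"
    then obtain b c where bc: "b \<in> B" "c \<in> interior C" "a = b - c" using lt unfolding set_less_s_def mdiff_def by blast
    obtain \<epsilon> where ep: "\<epsilon> > 0" "c + \<epsilon> *\<^sub>R e \<in> interior C" using eps_int[OF bc(2)] by blast
    have eq: "(b + \<epsilon> *\<^sub>R e) - a = c + \<epsilon> *\<^sub>R e" using bc by (simp add: algebra_simps)
    have "a \<in> g (b, \<epsilon>) \<longleftrightarrow> (b + \<epsilon> *\<^sub>R e) - a \<in> interior C" unfolding g_def by simp
    then have "a \<in> g (b, \<epsilon>)" using eq ep(2) by metis
    moreover have "a = a + 0" by simp
    ultimately have "a \<in> msum (g (b, \<epsilon>)) (uminus ` C)" unfolding msum_def using z by blast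
    moreover have "(b, \<epsilon>) \<in> I" unfolding I_def using bc ep by simp
    ultimately show "a \<in> (\<Union>U\<in>g ` I. msum U (uminus ` C))" by blast
  qed
  obtain V where V: "V \<subseteq> g ` I" "finite V" "A \<subseteq> (\<Union>U\<in>V. msum U (uminus ` C))"
    using cpt opn cov unfolding C_compact_def by (metis (no_types, lifting))
  obtain P where P: "P \<subseteq> I" "finite P" "V = g ` P" using finite_subset_image[OF V(2) V(1)] by blast
  have key: "ph (fst p) + ereal (snd p) \<le> ereal t"
    if p: "p \<in> I" and y: "y \<in> msum (g p) (uminus ` C)" and t: "y - t *\<^sub>R e \<in> C" for p y t
  proof -
    obtain v c' where vc: "v \<in> g p" "c' \<in> C" "y = v + - c'" using y unfolding msum_def by blast
    have v: "(fst p + snd p *\<^sub>R e) - v \<in> C" using vc(1) interior_subset unfolding g_def by blast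
    have "((fst p + snd p *\<^sub>R e) - v) + c' \<in> C" using add_C v vc(2) by blast
    then have "(((fst p + snd p *\<^sub>R e) - v) + c') + (y - t *\<^sub>R e) \<in> C" using add_C t by blast
    moreover have "(((fst p + snd p *\<^sub>R e) - v) + c') + (y - t *\<^sub>R e) = fst p - (t - snd p) *\<^sub>R e"
      using vc(3) by (simp add: algebra_simps)
    ultimately have "t - snd p \<in> S (fst p)" unfolding S_def by simp
    then have "ph (fst p) \<le> ereal (t - snd p)" unfolding ph_def by (simp add: Inf_lower)
    then show ?thesis by (cases "ph (fst p)") auto
  qed
  define r where "r = (\<lambda>p::'a\<times>real. real_of_ereal (ph (fst p)))"
  have rfin: "ph (fst p) = ereal (r p)" if "p \<in> I" for p
  proof -
    have "mdiff B C \<noteq> UNIV" using B unfolding P0_def by auto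
    then have "ph (fst p) > - \<infinity>" using ph_fin_bot that unfolding I_def by auto
    moreover have "ph (fst p) < \<infinity>" using ph_fin_top by auto
    ultimately show ?thesis unfolding r_def by (cases "ph (fst p)") auto
  qed
  have Pne: "P \<noteq> {}" using Ane V(3) P(3) by auto
  define mr where "mr = Min (r ` P)"
  define \<delta> where "\<delta> = Min (snd ` P)"
  have dpos: "\<delta> > 0" unfolding \<delta>_def using Pne P(1,2) Min_in[of "snd ` P"] unfolding I_def by auto
  have "mr \<in> r ` P" unfolding mr_def using Min_in[of "r ` P"] P(2) Pne by auto
  then obtain p0 where p0: "p0 \<in> P" "mr = r p0" by blast
  have "J B \<le> ph (fst p0)"
  proof -
    have "fst p0 \<in> B" using p0 P(1) unfolding I_def by auto
    then have "S (fst p0) \<subseteq> {t. \<exists>b\<in>B. b - t *\<^sub>R e \<in> C}" unfolding S_def by auto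
    then show ?thesis unfolding J_def ph_def by (intro Inf_superset_mono image_mono)
  qed
  also have "\<dots> = ereal mr" using rfin[of p0] p0 P(1) by auto
  also have "\<dots> < ereal (mr + \<delta>)" using dpos by simp
  also have "ereal (mr + \<delta>) \<le> J A" unfolding J_def
  proof (rule Inf_greatest)
    fix x assume "x \<in> ereal ` {t. \<exists>a\<in>A. a - t *\<^sub>R e \<in> C}"
    then obtain t a where ta: "x = ereal t" "a \<in> A" "a - t *\<^sub>R e \<in> C" by auto
    obtain p where p: "p \<in> P" "a \<in> msum (g p) (uminus ` C)" using V(3) P(3) ta(2) by blast
    have "ph (fst p) + ereal (snd p) \<le> ereal t" using key[of p a t] p P(1) ta(3) by auto
    then have "r p + snd p \<le> t" using rfin[of p] p P(1) by auto
    moreover have "mr \<le> r p" unfolding mr_def using p P(2) by simp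
    moreover have "\<delta> \<le> snd p" unfolding \<delta>_def using p P(2) by simp
    ultimately show "ereal (mr + \<delta>) \<le> x" using ta(1) by simp
  qed
  finally show ?thesis .
qed

lemma main_loc:
  shows "s_increasing C (P0 C) (v_e C e)
    \<and> strictly_s_increasing C {A \<in> P0 C. mp_C_compact C A} (v_e C e)
    \<and> (\<forall>A\<in>P0 C. \<forall>B\<in>P0 C. A \<in> s_class C B \<longrightarrow> v_e C e A = v_e C e B)"
proof (intro conjI)
  show "s_increasing C (P0 C) (v_e C e)" unfolding s_increasing_def using mono_le by blast
  show "strictly_s_increasing C {A \<in> P0 C. mp_C_compact C A} (v_e C e)"
    unfolding strictly_s_increasing_def
  proof (intro ballI impI)
    fix A B assume A: "A \<in> {A \<in> P0 C. mp_C_compact C A}" and B: "B \<in> {A \<in> P0 C. mp_C_compact C A}"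
      and lt: "set_less_s C A B"
    have 1: "(SUP b\<in>B. ph b) < (SUP a\<in>A. ph a)"
      using strict1[of A B] A B lt unfolding mp_C_compact_def P0_def by auto
    have 2: "J B < J A"
      using strict2[of B A] A B lt unfolding mp_C_compact_def P0_def by auto
    show "lt2 (v_e C e A) (v_e C e B)" unfolding lt2_def v_eq using 1 2 by simp
  qed
  show "\<forall>A\<in>P0 C. \<forall>B\<in>P0 C. A \<in> s_class C B \<longrightarrow> v_e C e A = v_e C e B"
  proof (intro ballI impI)
    fix A B assume "A \<in> s_class C B"
    then have "set_le_s C B A" "set_le_s C A B" unfolding s_class_def set_equiv_s_def by auto
    then have "le2 (v_e C e A) (v_e C e B)" "le2 (v_e C e B) (v_e C e A)" using mono_le by auto
    then show "v_e C e A = v_e C e B" unfolding le2_def by (simp add: prod_eq_iff order_antisym)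
  qed
qed

end

theorem mainTheorem5:
  fixes C :: "'a::{real_vector,topological_space} set" and e :: 'a
  assumes "topological_linear_space TYPE('a)"
    and "convex C" and "closed C" and "cone C" and "C \<inter> uminus ` C = {0}"
    and "interior C \<noteq> {}"
    and "e \<in> uminus ` interior C"
  shows "s_increasing C (P0 C) (v_e C e)
    \<and> strictly_s_increasing C {A \<in> P0 C. mp_C_compact C A} (v_e C e)
    \<and> (\<forall>A\<in>P0 C. \<forall>B\<in>P0 C. A \<in> s_class C B \<longrightarrow> v_e C e A = v_e C e B)"
proof -
  interpret sett C e using assms by (unfold_locales) auto
  show ?thesis by (rule main_loc)
qed

end
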